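(* Let $n,x$ be integers with $1<x<n$, so that $G=C_{2n}(x,1,n)$ is a $5$-regular circulant graph. If $n\equiv 1\pmod 3$, $x\equiv 2\pmod 3$ and $1<x\leq \tfrac{2n}{3}$, then $G$ is word-representable.
   Context: Two distinct letters $x,y$ alternate in a word $w$ if, after deleting all other letters from $w$, the resulting word is of the form $xyxy\cdots$ or $yxyx\cdots$ (of even or odd length). A graph $G=(V,E)$ is word-representable if there is a word $w$ over the alphabet $V$, containing every letter of $V$ at least once, such that for all distinct $x,y\in V$, $xy\in E$ if and only if $x$ and $y$ alternate in $w$. For an integer $m$ and a set $R$ of positive integers each at most $m/2$, the circulant graph $C_m(R)$ has vertex set $\{0,1,\dots,m-1\}$, with $i$ and $j$ adjacent iff $\min(|i-j|,\,m-|i-j|)\in R$. $C_{2n}(x,1,n)$ denotes the circulant graph on $2n$ vertices with jump set $\{1,x,n\}$; it is $5$-regular exactly when $1<x<n$. *)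

theory Defs
  imports Main
begin

definition alternate :: "'a list \<Rightarrow> 'a \<Rightarrow> 'a \<Rightarrow> bool" where
  "alternate w a b \<longleftrightarrow>
     (let u = filter (\<lambda>c. c = a \<or> c = b) w in
        \<forall>i. Suc i < length u \<longrightarrow> u ! i \<noteq> u ! Suc i)"

definition word_representable :: "'a set \<Rightarrow> ('a \<Rightarrow> 'a \<Rightarrow> bool) \<Rightarrow> bool" where
  "word_representable V E \<longleftrightarrow>
     (\<exists>w. set w = V \<and>
        (\<forall>a\<in>V. \<forall>b\<in>V. a \<noteq> b \<longrightarrow> (E a b \<longleftrightarrow> alternate w a b)))"

definition circ_dist :: "nat \<Rightarrow> nat \<Rightarrow> nat \<Rightarrow> nat" where
  "circ_dist m i j = (let d = (if i \<le> j then j - i else i - j) in min d (m - d))"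

definition circulant_adj :: "nat \<Rightarrow> nat set \<Rightarrow> nat \<Rightarrow> nat \<Rightarrow> bool" where
  "circulant_adj m R i j \<longleftrightarrow> i < m \<and> j < m \<and> circ_dist m i j \<in> R"

end

theory Submission
  imports Defs
begin


definition alternating :: "'a list \<Rightarrow> bool" where
  "alternating u \<longleftrightarrow> (\<forall>i. Suc i < length u \<longrightarrow> u ! i \<noteq> u ! Suc i)"

lemma alternate_iff: "alternate w a b \<longleftrightarrow> alternating (filter (\<lambda>c. c = a \<or> c = b) w)"
  by (simp add: alternate_def alternating_def Let_def)

lemma alternating_append:
  assumes "alternating xs" "alternating ys" "xs \<noteq> [] \<Longrightarrow> ys \<noteq> [] \<Longrightarrow> last xs \<noteq> hd ys"
  shows "alternating (xs @ ys)"
  unfolding alternating_def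
proof (intro allI impI)
  fix i assume i: "Suc i < length (xs @ ys)"
  show "(xs @ ys) ! i \<noteq> (xs @ ys) ! Suc i"
  proof (cases "Suc i < length xs")
    case True then show ?thesis using assms(1) by (simp add: nth_append alternating_def)
  next
    case False
    show ?thesis
    proof (cases "i < length xs")
      case True
      then have e: "Suc i = length xs" using False by auto
      then have ne: "xs \<noteq> []" "ys \<noteq> []" using i by auto
      have ii: "i = length xs - 1" using e by simp
      have "(xs @ ys) ! i = last xs" using e ne ii by (simp add: nth_append last_conv_nth)
      moreover have "(xs @ ys) ! Suc i = hd ys" using e ne by (simp add: nth_append hd_conv_nth)
      ultimately show ?thesis using assms(3) ne by simp
    next
      case False
      then have s: "Suc i - length xs = Suc (i - length xs)" by simp
      have "Suc (i - length xs) < length ys" using i False by simp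
      then show ?thesis using assms(2) False s by (simp add: nth_append alternating_def)
    qed
  qed
qed

lemma alternating_abab: "a \<noteq> b \<Longrightarrow> alternating [a,b,a,b]"
  unfolding alternating_def
proof (intro allI impI)
  fix i assume "a \<noteq> b" "Suc i < length [a,b,a,b]"
  then have "i = 0 \<or> i = 1 \<or> i = 2" by auto
  then show "[a,b,a,b] ! i \<noteq> [a,b,a,b] ! Suc i" using \<open>a \<noteq> b\<close> by auto
qed

lemma alternating_blocks: "a \<noteq> b \<Longrightarrow> alternating (concat (map (\<lambda>_. [a,b,a,b]) D))"
proof (induction D)
  case Nil then show ?case by (simp add: alternating_def)
next
  case (Cons d D)
  have "concat (map (\<lambda>_. [a,b,a,b]) (d # D)) = [a,b,a,b] @ concat (map (\<lambda>_. [a,b,a,b]) D)" by simp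
  moreover have "concat (map (\<lambda>_. [a,b,a,b]) D) \<noteq> [] \<Longrightarrow> hd (concat (map (\<lambda>_. [a,b,a,b]) D)) = a"
    by (cases D) auto
  ultimately show ?case using Cons alternating_append[OF alternating_abab[OF Cons.prems] Cons.IH] by auto
qed

lemma not_alternating_mid:
  assumes "Suc i < length ys" "ys ! i = ys ! Suc i"
  shows "\<not> alternating (xs @ ys @ zs)"
proof -
  have "(xs @ ys @ zs) ! (length xs + i) = ys ! i" using assms(1) by (simp add: nth_append)
  moreover have "(xs @ ys @ zs) ! Suc (length xs + i) = ys ! Suc i" using assms(1)
    by (simp add: nth_append)
  moreover have "Suc (length xs + i) < length (xs @ ys @ zs)" using assms(1) by simp
  ultimately show ?thesis using assms(2) unfolding alternating_def by metis
qed

definition piece :: "nat list \<Rightarrow> nat \<Rightarrow> (nat \<Rightarrow> nat) \<Rightarrow> (nat \<Rightarrow> nat) \<Rightarrow> nat list" where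
  "piece L T s e = concat (map (\<lambda>t. filter (\<lambda>v. s v = t \<or> e v = t) L) [0..<T])"

lemma filter_single: "distinct L \<Longrightarrow> a \<in> set L \<Longrightarrow> filter (\<lambda>v. v = a) L = [a]"
proof (induction L)
  case Nil then show ?case by simp
next
  case (Cons c L)
  then show ?case by (cases "c = a") (auto simp: filter_empty_conv)
qed

lemma concat_map_if: "concat (map (\<lambda>t. if P t then [f t] else []) ts) = map f (filter P ts)"
  by (induction ts) auto

lemma piece_filter:
  assumes L: "distinct L" "a \<in> set L" "b \<in> set L" "a \<noteq> b"
    and d: "s a \<noteq> s b" "s a \<noteq> e b" "e a \<noteq> s b" "e a \<noteq> e b"
  shows "filter (\<lambda>c. c = a \<or> c = b) (piece L T s e) =
    map (\<lambda>t. if t = s a \<or> t = e a then a else b) (filter (\<lambda>t. t = s a \<or> t = e a \<or> t = s b \<or> t = e b) [0..<T])"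
proof -
  have step: "filter (\<lambda>c. c = a \<or> c = b) (filter (\<lambda>v. s v = t \<or> e v = t) L) =
     (if t = s a \<or> t = e a \<or> t = s b \<or> t = e b then [if t = s a \<or> t = e a then a else b] else [])" for t
  proof -
    have ff: "filter (\<lambda>c. c = a \<or> c = b) (filter (\<lambda>v. s v = t \<or> e v = t) L) =
        filter (\<lambda>v. (s v = t \<or> e v = t) \<and> (v = a \<or> v = b)) L" by (simp add: filter_filter conj_commute)
    show ?thesis
    proof (cases "t = s a \<or> t = e a")
      case True
      then have "filter (\<lambda>v. (s v = t \<or> e v = t) \<and> (v = a \<or> v = b)) L = filter (\<lambda>v. v = a) L"
        using d by (intro filter_cong) auto
      then show ?thesis using ff True filter_single[OF L(1,2)] by auto
    next
      case F: False
      show ?thesis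
      proof (cases "t = s b \<or> t = e b")
        case True
        then have "filter (\<lambda>v. (s v = t \<or> e v = t) \<and> (v = a \<or> v = b)) L = filter (\<lambda>v. v = b) L"
          using F by (intro filter_cong) auto
        then show ?thesis using ff True F filter_single[OF L(1,3)] by simp
      next
        case False
        then have "filter (\<lambda>v. (s v = t \<or> e v = t) \<and> (v = a \<or> v = b)) L = []"
          using F by (auto simp: filter_empty_conv)
        then show ?thesis using ff False F by simp
      qed
    qed
  qed
  show ?thesis
    unfolding piece_def filter_concat map_map comp_def step concat_map_if ..
qed

lemma four_sorted:
  assumes "p < q" "q < r" "r < u" "u < T" "\<And>t. P t \<longleftrightarrow> t = p \<or> t = q \<or> t = r \<or> t = u"
  shows "filter P [0..<T] = [p,q,r,u]"
proof (rule sorted_distinct_set_unique)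
  show "sorted (filter P [0..<T])" by (rule sorted_wrt_filter) simp
  show "distinct (filter P [0..<T])" by simp
  show "sorted [p,q,r,u]" using assms by simp
  show "distinct [p,q,r,u]" using assms by simp
  show "set (filter P [0..<T]) = set [p,q,r,u]" using assms by auto
qed

lemma piece_abab:
  assumes "distinct L" "a \<in> set L" "b \<in> set L" "a \<noteq> b"
    and "s a < s b" "s b < e a" "e a < e b" "e b < T"
  shows "filter (\<lambda>c. c = a \<or> c = b) (piece L T s e) = [a,b,a,b]"
proof -
  have "filter (\<lambda>t. t = s a \<or> t = e a \<or> t = s b \<or> t = e b) [0..<T] = [s a, s b, e a, e b]"
    using assms by (intro four_sorted) auto
  then show ?thesis using assms by (subst piece_filter) auto
qed

lemma piece_abba:
  assumes "distinct L" "a \<in> set L" "b \<in> set L" "a \<noteq> b"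
    and "s a < s b" "s b < e b" "e b < e a" "e a < T"
  shows "filter (\<lambda>c. c = a \<or> c = b) (piece L T s e) = [a,b,b,a]"
proof -
  have "filter (\<lambda>t. t = s a \<or> t = e a \<or> t = s b \<or> t = e b) [0..<T] = [s a, s b, e b, e a]"
    using assms by (intro four_sorted) auto
  then show ?thesis using assms by (subst piece_filter) auto
qed

lemma piece_aabb:
  assumes "distinct L" "a \<in> set L" "b \<in> set L" "a \<noteq> b"
    and "s a < e a" "e a < s b" "s b < e b" "e b < T"
  shows "filter (\<lambda>c. c = a \<or> c = b) (piece L T s e) = [a,a,b,b]"
proof -
  have "filter (\<lambda>t. t = s a \<or> t = e a \<or> t = s b \<or> t = e b) [0..<T] = [s a, e a, s b, e b]"
    using assms by (intro four_sorted) auto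
  then show ?thesis using assms by (subst piece_filter) auto
qed

lemma set_piece_sub: "set (piece L T s e) \<subseteq> set L"
  by (auto simp: piece_def)

lemma set_piece_eq: "(\<And>v. v \<in> set L \<Longrightarrow> s v < T) \<Longrightarrow> set (piece L T s e) = set L"
  by (auto simp: piece_def) (metis atLeastLessThan_iff zero_le)

locale cgraph =
  fixes m :: nat and E :: "nat \<Rightarrow> nat \<Rightarrow> bool" and col :: "nat \<Rightarrow> nat"
  assumes E_sym: "E a b \<Longrightarrow> E b a"
    and E_V: "E a b \<Longrightarrow> a < m \<and> b < m"
    and E_col: "E a b \<Longrightarrow> col a \<noteq> col b"
    and col_le: "a < m \<Longrightarrow> col a \<le> 3"
    and shortcut: "\<lbrakk>E a b; E b d; E d e; E a e; col a = 0; col b = 1; col d = 2; col e = 3\<rbrakk>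
                   \<Longrightarrow> E a d \<and> E b e"
begin

definition arc where "arc u v \<longleftrightarrow> E u v \<and> col u < col v"

definition reach where
  "reach u v \<longleftrightarrow> u = v \<or> arc u v \<or> (\<exists>a. arc u a \<and> arc a v) \<or> (\<exists>a b. arc u a \<and> arc a b \<and> arc b v)"

lemma arcD: "arc u v \<Longrightarrow> E u v \<and> col u < col v \<and> u < m \<and> v < m \<and> col v \<le> 3"
  unfolding arc_def using E_V col_le by blast

lemma reach_refl[simp]: "reach u u" by (simp add: reach_def)

lemma arc_reach: "arc u v \<Longrightarrow> reach u v" by (simp add: reach_def)

lemma reach_col: "reach u v \<Longrightarrow> u = v \<or> col u < col v"
  unfolding reach_def by (auto dest!: arcD)

lemma reach_antisym: "reach u v \<Longrightarrow> reach v u \<Longrightarrow> u = v"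
  using reach_col[of u v] reach_col[of v u] by auto

lemma reach_step: "arc u v \<Longrightarrow> reach v w \<Longrightarrow> reach u w"
  unfolding reach_def
  apply (elim disjE exE conjE)
  apply auto[3]
  apply (drule arcD)+
  apply linarith
  done

lemma reach_trans: "reach u v \<Longrightarrow> reach v w \<Longrightarrow> reach u w"
proof -
  assume uv: "reach u v" and vw: "reach v w"
  from uv show ?thesis unfolding reach_def[of u v]
  proof (elim disjE exE conjE)
    assume "u = v" then show ?thesis using vw by simp
  next
    assume "arc u v" then show ?thesis using vw reach_step by blast
  next
    fix a assume "arc u a" "arc a v" then show ?thesis using vw reach_step by blast
  next
    fix a b assume "arc u a" "arc a b" "arc b v" then show ?thesis using vw reach_step by blast
  qed
qed

lemma shortcut': "arc a b \<Longrightarrow> arc b d \<Longrightarrow> arc d e \<Longrightarrow> E a e \<Longrightarrow> E a d \<and> E b e"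
proof -
  assume h: "arc a b" "arc b d" "arc d e" "E a e"
  then have "col a = 0" "col b = 1" "col d = 2" "col e = 3" by (auto dest!: arcD)
  then show ?thesis using h shortcut unfolding arc_def by blast
qed

lemma semi:
  assumes "reach u x" "reach x y" "x \<noteq> y" "reach y w" "arc u w"
  shows "E x y"
proof -
  from assms(2,3) have xy: "arc x y \<or> (\<exists>a. arc x a \<and> arc a y) \<or> (\<exists>a b. arc x a \<and> arc a b \<and> arc b y)"
    by (simp add: reach_def)
  show ?thesis
  proof (cases "arc x y")
    case True then show ?thesis by (simp add: arc_def)
  next
    case nxy: False
    show ?thesis
    proof (cases "\<exists>a. arc x a \<and> arc a y")
      case True
      then obtain a where a: "arc x a" "arc a y" by blast
      have cxy: "col x + 2 \<le> col y" using a by (auto dest!: arcD)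
      show ?thesis
      proof (cases "u = x")
        case ux: True
        show ?thesis
        proof (cases "y = w")
          case True then show ?thesis using ux assms(5) by (simp add: arc_def)
        next
          case False
          then have "col y < col w" using assms(4) reach_col by blast
          have "\<exists>b. arc y b \<and> b = w \<or> False" using assms(4) False \<open>col y < col w\<close> a
            unfolding reach_def by (auto dest!: arcD)
          then have "arc y w" by blast
          then show ?thesis using shortcut'[OF a \<open>arc y w\<close>] assms(5) ux by (simp add: arc_def)
        qed
      next
        case False
        then have "col u < col x" using assms(1) reach_col by blast
        have "y = w \<or> col y < col w" using assms(4) reach_col by blast
        then have yw: "y = w" using \<open>col u < col x\<close> cxy assms(5) by (auto dest!: arcD)
        have "arc u x" using assms(1) False \<open>col u < col x\<close> cxy assms(5) yw
          unfolding reach_def by (auto dest!: arcD)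
        then show ?thesis using shortcut'[OF \<open>arc u x\<close> a(1)] a(2) assms(5) yw
          by (auto simp: arc_def)
      qed
    next
      case False
      then obtain a b where ab: "arc x a" "arc a b" "arc b y" using xy nxy by blast
      have "col x + 3 \<le> col y" using ab by (auto dest!: arcD)
      have h1: "u = x \<or> col u < col x" using assms(1) reach_col by blast
      have h2: "y = w \<or> col y < col w" using assms(4) reach_col by blast
      have "col w \<le> 3" using arcD[OF assms(5)] by simp
      then have "u = x" "y = w" using h1 h2 \<open>col x + 3 \<le> col y\<close> by auto
      then show ?thesis using assms(5) by (simp add: arc_def)
    qed
  qed
qed


definition NN :: nat where "NN = 4 * m"
definition rk :: "nat \<Rightarrow> nat" where "rk v = col v * m + v"

lemma rk_lt: "v < m \<Longrightarrow> rk v < NN"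
proof -
  assume v: "v < m"
  then have "col v \<le> 3" by (rule col_le)
  then have "col v * m \<le> 3 * m" by simp
  then show ?thesis using v unfolding rk_def NN_def by linarith
qed

lemma arc_rk: "arc u v \<Longrightarrow> rk u < rk v"
proof -
  assume "arc u v"
  then have h: "col u < col v" "u < m" by (auto dest!: arcD)
  then have "Suc (col u) \<le> col v" by simp
  then have "Suc (col u) * m \<le> col v * m" by (rule mult_right_mono) simp
  then show ?thesis using h by (simp add: rk_def)
qed

definition Fs :: "nat \<Rightarrow> nat set" where
  "Fs x = {v. \<exists>w. reach v w \<and> (reach w x \<or> (\<exists>u. reach u x \<and> arc u w))}"
definition ds :: "nat \<Rightarrow> nat \<Rightarrow> nat" where "ds x v = (if v \<in> Fs x then rk v else 2 * NN + rk v)"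
definition de :: "nat \<Rightarrow> nat \<Rightarrow> nat" where "de x v = (if reach v x then NN + rk v else 3 * NN + rk v)"

definition Zs :: "nat \<Rightarrow> nat \<Rightarrow> nat set" where
  "Zs x y = {v. (\<exists>u. arc u y \<and> reach v u) \<or> reach v x}"
definition rr :: "nat \<Rightarrow> nat \<Rightarrow> nat \<Rightarrow> nat" where
  "rr x y v = (if v \<in> Zs x y \<and> v \<noteq> x then rk v else if v = x then NN else NN + 1 + rk v)"
definition ns :: "nat \<Rightarrow> nat \<Rightarrow> nat \<Rightarrow> nat" where "ns x y v = 2 * rr x y v"
definition ne :: "nat \<Rightarrow> nat \<Rightarrow> nat \<Rightarrow> nat" where
  "ne x y v = (if v = y then 2 * (3 * NN + 2) - 1 else 2 * (2 * NN + 2 + rr x y v))"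

lemma Fs_closed: "arc a b \<Longrightarrow> b \<in> Fs x \<Longrightarrow> a \<in> Fs x"
  unfolding Fs_def using reach_step by blast

lemma dis_arc:
  assumes ab: "arc a b"
  shows "ds x a < ds x b \<and> ds x b < de x a \<and> de x a < de x b"
proof -
  have r: "rk a < rk b" "rk a < NN" "rk b < NN" using arc_rk[OF ab] arcD[OF ab] rk_lt by auto
  have 1: "ds x a < ds x b"
    using Fs_closed[OF ab] r by (auto simp: ds_def)
  have 2: "ds x b < de x a"
  proof (cases "reach a x")
    case True
    have "reach b b \<and> (reach b x \<or> (\<exists>u. reach u x \<and> arc u b))" using ab True by auto
    then have "b \<in> Fs x" unfolding Fs_def by blast
    then show ?thesis using True r by (simp add: ds_def de_def)
  next
    case False then show ?thesis using r by (simp add: ds_def de_def)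
  qed
  have 3: "de x a < de x b"
    using reach_step[OF ab, of x] r by (auto simp: de_def)
  show ?thesis using 1 2 3 by blast
qed

lemma dis_pair:
  assumes "reach x y" "x \<noteq> y" "\<not> E x y" "x < m" "y < m"
  shows "ds x x < de x x \<and> de x x < ds x y \<and> ds x y < de x y"
proof -
  have "reach x x \<and> (reach x x \<or> (\<exists>u. reach u x \<and> arc u x))" by simp
  then have xF: "x \<in> Fs x" unfolding Fs_def by blast
  have yF: "y \<notin> Fs x"
  proof
    assume "y \<in> Fs x"
    then obtain w where w: "reach y w" "reach w x \<or> (\<exists>u. reach u x \<and> arc u w)" unfolding Fs_def by blast
    show False
    proof (cases "reach w x")
      case True
      then have "reach y x" using w(1) reach_trans by blast
      then show False using assms(1,2) reach_antisym by blast
    next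
      case False
      then obtain u where "reach u x" "arc u w" using w by blast
      then have "E x y" using semi[OF _ assms(1,2) w(1)] by blast
      then show False using assms(3) by blast
    qed
  qed
  have ny: "\<not> reach y x" using assms(1,2) reach_antisym by blast
  have r: "rk x < NN" "rk y < NN" using assms rk_lt by auto
  show ?thesis using xF yF ny r by (simp add: ds_def de_def)
qed

lemma Zs_closed: "arc a b \<Longrightarrow> b \<in> Zs x y \<Longrightarrow> a \<in> Zs x y"
  unfolding Zs_def using reach_step by blast

context
  fixes x y assumes xy: "x \<noteq> y" "\<not> E x y" "\<not> reach x y" "\<not> reach y x" "x < m" "y < m"
begin

lemma y_notin_Z: "y \<notin> Zs x y"
proof
  assume "y \<in> Zs x y"
  then show False unfolding Zs_def
  proof (elim CollectE disjE exE conjE)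
    fix u assume "arc u y" "reach y u"
    then show False using reach_col[of y u] by (auto dest!: arcD)
  next
    assume "reach y x" then show False using xy by blast
  qed
qed

lemma rr_le: "rr x y v \<le> NN + 1 + rk v"
  by (auto simp: rr_def)

lemma rr_mono: "arc a b \<Longrightarrow> rr x y a < rr x y b"
proof -
  assume ab: "arc a b"
  have r: "rk a < rk b" "rk a < NN" "rk b < NN" using arc_rk[OF ab] arcD[OF ab] rk_lt by auto
  have anb: "a \<noteq> b" using ab by (auto dest!: arcD)
  show ?thesis
  proof (cases "b \<in> Zs x y \<and> b \<noteq> x")
    case True
    have aZ: "a \<in> Zs x y" using Zs_closed[OF ab] True by blast
    have "a \<noteq> x"
    proof
      assume ax: "a = x"
      from True have "b \<in> Zs x y" by blast
      then show False unfolding Zs_def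
      proof (elim CollectE disjE exE conjE)
        fix u assume "arc u y" "reach b u"
        then have "reach x y" using ax ab reach_step reach_trans arc_reach by blast
        then show False using xy by blast
      next
        assume "reach b x"
        then have "reach x x \<and> col x < col b \<and> (b = x \<or> col b < col x)"
          using ax ab reach_col by (auto dest!: arcD)
        then show False using True by auto
      qed
    qed
    then show ?thesis using True aZ r by (simp add: rr_def)
  next
    case False
    show ?thesis
    proof (cases "b = x")
      case True
      then have "a \<in> Zs x y" using ab unfolding Zs_def using arc_reach by blast
      then show ?thesis using True anb r by (simp add: rr_def)
    next
      case bx: False
      then have "rr x y b = NN + 1 + rk b" using False by (simp add: rr_def)
      then show ?thesis using rr_le[of a] r by linarith
    qed
  qed
qed

lemma nes_arc:
  assumes ab: "arc a b"
  shows "ns x y a < ns x y b \<and> ns x y b < ne x y a \<and> ne x y a < ne x y b"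
proof -
  have r: "rk a < rk b" "rk a < NN" "rk b < NN" using arc_rk[OF ab] arcD[OF ab] rk_lt by auto
  have m1: "rr x y a < rr x y b" by (rule rr_mono[OF ab])
  have 1: "ns x y a < ns x y b" using m1 by (simp add: ns_def)
  have 2: "ns x y b < ne x y a"
    using rr_le[of b] r by (auto simp: ns_def ne_def)
  have 3: "ne x y a < ne x y b"
  proof (cases "a = y")
    case True
    then have bny: "b \<noteq> y" using ab by (auto dest!: arcD)
    have "b \<noteq> x" using ab True xy E_sym by (auto simp: arc_def)
    moreover have "b \<notin> Zs x y"
    proof
      assume "b \<in> Zs x y"
      then show False unfolding Zs_def
      proof (elim CollectE disjE exE conjE)
        fix u assume "arc u y" "reach b u"
        then show False using True ab reach_col[of b u] by (auto dest!: arcD)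
      next
        assume "reach b x"
        then have "reach y x" using True ab reach_step by blast
        then show False using xy by blast
      qed
    qed
    ultimately have "rr x y b = NN + 1 + rk b" by (simp add: rr_def)
    then show ?thesis using True bny by (simp add: ne_def)
  next
    case any: False
    show ?thesis
    proof (cases "b = y")
      case True
      have "arc a y \<and> reach a a" using ab True by simp
      then have "a \<in> Zs x y" unfolding Zs_def by blast
      moreover have "a \<noteq> x" using ab True xy by (auto simp: arc_def)
      ultimately have "rr x y a = rk a" by (simp add: rr_def)
      then show ?thesis using True any r by (simp add: ne_def)
    next
      case False
      then show ?thesis using any m1 by (simp add: ne_def)
    qed
  qed
  show ?thesis using 1 2 3 by blast
qed

lemma nes_pair: "ns x y x < ns x y y \<and> ns x y y < ne x y y \<and> ne x y y < ne x y x"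
proof -
  have "rr x y x = NN" by (simp add: rr_def)
  moreover have "rr x y y = NN + 1 + rk y" using y_notin_Z xy by (simp add: rr_def)
  moreover have "rk y < NN" using xy rk_lt by auto
  ultimately show ?thesis using xy by (simp add: ns_def ne_def)
qed

end

definition TT :: nat where "TT = 10 * NN + 10"

lemma times_lt:
  assumes "v < m"
  shows "rk v < TT" "NN + rk v < TT" "ds x v < TT" "de x v < TT" "ns x y v < TT" "ne x y v < TT"
proof -
  have r: "rk v < NN" using assms rk_lt by auto
  show "rk v < TT" "NN + rk v < TT" "ds x v < TT" "de x v < TT" using r
    by (auto simp: TT_def ds_def de_def)
  have "rr x y v \<le> NN + 1 + rk v" by (auto simp: rr_def)
  then show "ns x y v < TT" "ne x y v < TT" using r by (auto simp: TT_def ns_def ne_def)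
qed

definition sd :: "(nat \<times> nat) option \<Rightarrow> nat \<Rightarrow> nat" where
  "sd d v = (case d of None \<Rightarrow> rk v
     | Some (x, y) \<Rightarrow> if reach x y then ds x v else if reach y x then ds y v else ns x y v)"
definition ed :: "(nat \<times> nat) option \<Rightarrow> nat \<Rightarrow> nat" where
  "ed d v = (case d of None \<Rightarrow> NN + rk v
     | Some (x, y) \<Rightarrow> if reach x y then de x v else if reach y x then de y v else ne x y v)"

definition Ds :: "(nat \<times> nat) option list" where
  "Ds = None # map Some (filter (\<lambda>(x, y). x \<noteq> y \<and> \<not> E x y) (List.product [0..<m] [0..<m]))"

definition PP :: "(nat \<times> nat) option \<Rightarrow> nat list" where
  "PP d = piece [0..<m] TT (sd d) (ed d)"

definition WW :: "nat list" where "WW = concat (map PP Ds)"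

lemma Ds_mem: "Some (x, y) \<in> set Ds \<longleftrightarrow> x \<noteq> y \<and> \<not> E x y \<and> x < m \<and> y < m"
  by (auto simp: Ds_def)

lemma PP_arc:
  assumes "d \<in> set Ds" "arc a b"
  shows "filter (\<lambda>c. c = a \<or> c = b) (PP d) = [a,b,a,b]"
proof -
  have ab: "a < m" "b < m" "a \<noteq> b" using assms(2) by (auto dest!: arcD)
  have key: "sd d a < sd d b \<and> sd d b < ed d a \<and> ed d a < ed d b \<and> ed d b < TT"
  proof (cases d)
    case None
    then show ?thesis using arc_rk[OF assms(2)] times_lt[OF ab(2)] rk_lt[OF ab(2)] by (simp add: sd_def ed_def)
  next
    case (Some p)
    obtain x y where p: "p = (x, y)" by (cases p)
    have m: "x \<noteq> y" "\<not> E x y" "x < m" "y < m" using assms(1) Some p Ds_mem by auto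
    show ?thesis
    proof (cases "reach x y")
      case True then show ?thesis using Some p dis_arc[OF assms(2)] times_lt[OF ab(2)]
        by (simp add: sd_def ed_def)
    next
      case F1: False
      show ?thesis
      proof (cases "reach y x")
        case True then show ?thesis using Some p F1 dis_arc[OF assms(2)] times_lt[OF ab(2)]
          by (simp add: sd_def ed_def)
      next
        case False
        have "x \<noteq> y" "\<not> E x y" "\<not> reach x y" "\<not> reach y x" "x < m" "y < m" using m F1 False by auto
        from nes_arc[OF this assms(2)] show ?thesis using Some p F1 False times_lt[OF ab(2)]
          by (simp add: sd_def ed_def)
      qed
    qed
  qed
  show ?thesis unfolding PP_def
    by (rule piece_abab) (use ab key in auto)
qed

lemma PP_pair:
  assumes "x \<noteq> y" "\<not> E x y" "x < m" "y < m"
  shows "\<exists>i. Suc i < length (filter (\<lambda>c. c = x \<or> c = y) (PP (Some (x, y)))) \<and>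
     filter (\<lambda>c. c = x \<or> c = y) (PP (Some (x, y))) ! i = filter (\<lambda>c. c = x \<or> c = y) (PP (Some (x, y))) ! Suc i"
proof -
  have L: "distinct [0..<m]" "x \<in> set [0..<m]" "y \<in> set [0..<m]" using assms by auto
  have sym: "(\<lambda>c. c = x \<or> c = y) = (\<lambda>c. c = y \<or> c = x)" by auto
  show ?thesis
  proof (cases "reach x y")
    case True
    have sdx: "sd (Some (x, y)) = ds x" "ed (Some (x, y)) = de x"
      using True by (auto simp: sd_def ed_def)
    have t: "de x y < TT" using times_lt[OF assms(4)] by blast
    have "filter (\<lambda>c. c = x \<or> c = y) (PP (Some (x, y))) = [x,x,y,y]"
      unfolding PP_def sdx using dis_pair[OF True assms] t
      by (intro piece_aabb[OF L assms(1)]) blast+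
    then show ?thesis by (intro exI[of _ 0]) simp
  next
    case F1: False
    show ?thesis
    proof (cases "reach y x")
      case True
      have sdx: "sd (Some (x, y)) = ds y" "ed (Some (x, y)) = de y"
        using True F1 by (auto simp: sd_def ed_def)
      have t: "de y x < TT" using times_lt[OF assms(3)] by blast
      have nE: "\<not> E y x" using assms(2) E_sym by blast
      have "filter (\<lambda>c. c = y \<or> c = x) (PP (Some (x, y))) = [y,y,x,x]"
        unfolding PP_def sdx using dis_pair[OF True assms(1)[symmetric] nE assms(4,3)] t
        by (intro piece_aabb[OF L(1,3,2) assms(1)[symmetric]]) blast+
      then show ?thesis unfolding sym by (intro exI[of _ 0]) simp
    next
      case False
      have h: "x \<noteq> y" "\<not> E x y" "\<not> reach x y" "\<not> reach y x" "x < m" "y < m" using assms F1 False by auto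
      have sdx: "sd (Some (x, y)) = ns x y" "ed (Some (x, y)) = ne x y"
        using F1 False by (auto simp: sd_def ed_def)
      have t: "ne x y x < TT" using times_lt[OF assms(3)] by blast
      have "filter (\<lambda>c. c = x \<or> c = y) (PP (Some (x, y))) = [x,y,y,x]"
        unfolding PP_def sdx using nes_pair[OF h] t
        by (intro piece_abba[OF L assms(1)]) blast+
      then show ?thesis by (intro exI[of _ 1]) simp
    qed
  qed
qed

lemma set_WW: "set WW = {0..<m}"
proof -
  have N: "None \<in> set Ds" by (simp add: Ds_def)
  have "set (PP None) = set [0..<m]" unfolding PP_def
    by (rule set_piece_eq) (simp add: sd_def times_lt)
  moreover have "set (PP d) \<subseteq> set [0..<m]" for d unfolding PP_def by (rule set_piece_sub)
  moreover have "set WW = (\<Union>d\<in>set Ds. set (PP d))" unfolding WW_def by simp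
  ultimately have "set WW = set [0..<m]" using N by blast
  then show ?thesis by simp
qed

lemma filter_WW: "filter P WW = concat (map (\<lambda>d. filter P (PP d)) Ds)"
  unfolding WW_def by (simp add: filter_concat map_map comp_def)

lemma arc_alt: "arc a b \<Longrightarrow> alternating (filter (\<lambda>c. c = a \<or> c = b) WW)"
proof -
  assume ab: "arc a b"
  then have ne: "a \<noteq> b" by (auto dest!: arcD)
  have m: "map (\<lambda>d. filter (\<lambda>c. c = a \<or> c = b) (PP d)) Ds = map (\<lambda>_. [a,b,a,b]) Ds"
    by (rule map_cong) (auto intro: PP_arc[OF _ ab])
  have "filter (\<lambda>c. c = a \<or> c = b) WW = concat (map (\<lambda>_. [a,b,a,b]) Ds)"
    unfolding filter_WW m ..
  then show ?thesis using alternating_blocks[OF ne] by simp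
qed

theorem word_rep: "word_representable {0..<m} E"
  unfolding word_representable_def
proof (intro exI conjI ballI impI)
  show "set WW = {0..<m}" by (rule set_WW)
next
  fix a b assume a: "a \<in> {0..<m}" and b: "b \<in> {0..<m}" and ab: "a \<noteq> b"
  show "E a b \<longleftrightarrow> alternate WW a b"
  proof
    assume E: "E a b"
    have sym: "(\<lambda>c. c = a \<or> c = b) = (\<lambda>c. c = b \<or> c = a)" by auto
    show "alternate WW a b"
    proof (cases "col a < col b")
      case True
      then have "arc a b" using E by (simp add: arc_def)
      then show ?thesis unfolding alternate_iff by (rule arc_alt)
    next
      case False
      then have "arc b a" using E E_col[OF E] E_sym by (simp add: arc_def)
      then show ?thesis unfolding alternate_iff sym by (rule arc_alt)
    qed
  next
    assume alt: "alternate WW a b"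
    show "E a b"
    proof (rule ccontr)
      assume nE: "\<not> E a b"
      have am: "a < m" "b < m" using a b by auto
      then have "Some (a, b) \<in> set Ds" using Ds_mem nE ab by blast
      then obtain D1 D2 where D: "Ds = D1 @ Some (a, b) # D2" by (meson split_list)
      obtain i where i: "Suc i < length (filter (\<lambda>c. c = a \<or> c = b) (PP (Some (a, b))))"
        "filter (\<lambda>c. c = a \<or> c = b) (PP (Some (a, b))) ! i = filter (\<lambda>c. c = a \<or> c = b) (PP (Some (a, b))) ! Suc i"
        using PP_pair[OF ab nE am] by blast
      have eq: "filter (\<lambda>c. c = a \<or> c = b) WW =
          concat (map (\<lambda>d. filter (\<lambda>c. c = a \<or> c = b) (PP d)) D1) @
          filter (\<lambda>c. c = a \<or> c = b) (PP (Some (a, b))) @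
          concat (map (\<lambda>d. filter (\<lambda>c. c = a \<or> c = b) (PP d)) D2)"
        unfolding filter_WW D by simp
      have "\<not> alternating (filter (\<lambda>c. c = a \<or> c = b) WW)"
        unfolding eq by (rule not_alternating_mid[OF i])
      moreover have "alternating (filter (\<lambda>c. c = a \<or> c = b) WW)"
        using alt by (simp only: alternate_iff)
      ultimately show False by contradiction
    qed
  qed
qed

end




lemma dvd_between_0: "(N::int) dvd z \<Longrightarrow> - N < z \<Longrightarrow> z < N \<Longrightarrow> z = 0"
proof -
  assume h: "N dvd z" "- N < z" "z < N"
  show "z = 0"
  proof (rule ccontr)
    assume "z \<noteq> 0"
    then have "0 < z \<or> 0 < - z" by auto
    then show False
    proof
      assume "0 < z" then have "N \<le> z" using h(1) zdvd_imp_le by blast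
      then show False using h by simp
    next
      assume "0 < - z" then have "N \<le> - z" using h(1) zdvd_imp_le by (simp add: dvd_minus_iff)
      then show False using h by simp
    qed
  qed
qed

lemma dvd_between_N: "(N::int) dvd z \<Longrightarrow> 0 < z \<Longrightarrow> z < 2 * N \<Longrightarrow> z = N"
proof -
  assume h: "N dvd z" "0 < z" "z < 2 * N"
  then have "N dvd (z - N)" by (simp add: dvd_diff)
  moreover have "N \<le> z" using h zdvd_imp_le by blast
  show ?thesis
  proof (rule ccontr)
    assume "z \<noteq> N"
    then have "0 < z - N" using \<open>N \<le> z\<close> by simp
    then have "N \<le> z - N" using \<open>N dvd (z - N)\<close> zdvd_imp_le by blast
    then show False using h by simp
  qed
qed

definition colc :: "nat \<Rightarrow> nat \<Rightarrow> nat \<Rightarrow> nat" where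
  "colc n s i = (let t = 2 * ((s * i) mod (2 * n)) in
     if t < n then 0 else if t < 2 * n then 1 else if t < 3 * n then 2 else 3)"

lemma circ_dist_sym: "circ_dist N i j = circ_dist N j i"
  by (simp add: circ_dist_def Let_def)

lemma sum4c:
  fixes n x u w c :: int
  assumes "1 < x" "3 * x \<le> 2 * n" "4 \<le> n" "3 * x + 1 \<noteq> 2 * n" "x \<noteq> 3"
    "u = 1 \<or> u = -1" "w = 1 \<or> w = -1" "c = 0 \<or> c = 1 \<or> c = 2 \<or> c = 3 \<or> c = 4"
    "c * u + (4 - c) * w * x = - 2 * n \<or> c * u + (4 - c) * w * x = 0 \<or> c * u + (4 - c) * w * x = 2 * n"
  shows "c = 0 \<and> 4 * x = 2 * n"
  using assms(6-9)
proof (elim disjE)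
qed (use assms(1-5) in simp_all)

lemma sum4:
  fixes n x u w D1 D2 D3 D4 :: int
  assumes "1 < x" "3 * x \<le> 2 * n" "4 \<le> n" "3 * x + 1 \<noteq> 2 * n" "x \<noteq> 3"
    "u = 1 \<or> u = -1" "w = 1 \<or> w = -1"
    "D1 = u \<or> D1 = w * x" "D2 = u \<or> D2 = w * x" "D3 = u \<or> D3 = w * x" "D4 = u \<or> D4 = w * x"
    "(2 * n) dvd (D1 + D2 + D3 + D4)"
  shows "D1 = w * x \<and> D2 = w * x \<and> D3 = w * x \<and> D4 = w * x \<and> 4 * x = 2 * n"
proof -
  obtain k where k: "D1 + D2 + D3 + D4 = 2 * n * k" using assms(12) by (auto elim: dvdE)
  have b: "\<bar>D1\<bar> \<le> x" "\<bar>D2\<bar> \<le> x" "\<bar>D3\<bar> \<le> x" "\<bar>D4\<bar> \<le> x" using assms(1,6-11) by auto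
  have np: "0 < n" using assms(3) by linarith
  have lt: "\<bar>2 * n * k\<bar> < 4 * n" using b k assms(1,2) by linarith
  have "k = -1 \<or> k = 0 \<or> k = 1"
  proof (rule ccontr)
    assume "\<not> (k = -1 \<or> k = 0 \<or> k = 1)"
    then have "2 \<le> \<bar>k\<bar>" by auto
    then have "2 * n * 2 \<le> 2 * n * \<bar>k\<bar>" using np by (intro mult_left_mono) auto
    then show False using lt np by (simp add: abs_mult)
  qed
  then have S: "D1 + D2 + D3 + D4 = - 2 * n \<or> D1 + D2 + D3 + D4 = 0 \<or> D1 + D2 + D3 + D4 = 2 * n"
    using k by auto
  define f :: "int \<Rightarrow> int" where "f D = (if D = u then 1 else 0)" for D
  have uw: "u \<noteq> w * x" using assms(1,6,7) by auto
  have Df: "D = f D * u + (1 - f D) * w * x" if "D = u \<or> D = w * x" for D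
    using that uw by (auto simp: f_def)
  have f01: "f D = 0 \<or> f D = 1" for D by (simp add: f_def)
  define c where "c = f D1 + f D2 + f D3 + f D4"
  have sum: "D1 + D2 + D3 + D4 = c * u + (4 - c) * w * x"
    using Df[OF assms(8)] Df[OF assms(9)] Df[OF assms(10)] Df[OF assms(11)] unfolding c_def
    by (simp add: algebra_simps)
  have "c = 0 \<or> c = 1 \<or> c = 2 \<or> c = 3 \<or> c = 4"
    using f01[of D1] f01[of D2] f01[of D3] f01[of D4] unfolding c_def by auto
  then have c0: "c = 0 \<and> 4 * x = 2 * n" using sum4c[OF assms(1-7)] S sum by simp
  then have "f D1 = 0" "f D2 = 0" "f D3 = 0" "f D4 = 0"
    using f01[of D1] f01[of D2] f01[of D3] f01[of D4] unfolding c_def by auto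
  then show ?thesis using assms(8-11) c0 by (auto simp: f_def)
qed

locale circ_setup =
  fixes n x s :: nat
  assumes x1: "1 < x" and xn: "x < n" and nmod: "n mod 3 = 1" and xmod: "x mod 3 = 2"
    and x23: "3 * x \<le> 2 * n"
    and sodd: "odd s"
    and s1a: "n \<le> 2 * (s mod (2*n))" and s1b: "2 * (s mod (2*n)) \<le> 3 * n"
    and sxa: "n \<le> 2 * (s * x mod (2*n))" and sxb: "2 * (s * x mod (2*n)) \<le> 3 * n"
begin

abbreviation "EE \<equiv> circulant_adj (2*n) {1, x, n}"

definition Ti :: "nat \<Rightarrow> int" where "Ti v = (int s * int v) mod (2 * int n)"
definition Aa :: "nat \<Rightarrow> int" where "Aa d = (int s * int d) mod (2 * int n)"

lemma n_pos: "0 < n" using x1 xn by simp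

lemma Ti_bounds: "0 \<le> Ti v" "Ti v < 2 * int n"
  using n_pos by (auto simp: Ti_def)

lemma Ti_nat: "int (s * v mod (2 * n)) = Ti v"
  by (simp add: Ti_def of_nat_mod)

lemma An: "Aa n = int n"
proof -
  obtain k where "s = 2 * k + 1" using sodd oddE by blast
  then have "int s * int n = int n + (int k) * (2 * int n)" by (simp add: algebra_simps)
  then show ?thesis using n_pos by (simp add: Aa_def)
qed

lemma A1: "int n \<le> 2 * Aa 1" "2 * Aa 1 \<le> 3 * int n"
proof -
  have e: "Aa 1 = int (s mod (2*n))" by (simp add: Aa_def of_nat_mod)
  have "int n \<le> int (2 * (s mod (2*n)))" "int (2 * (s mod (2*n))) \<le> int (3 * n)"
    using s1a s1b by (simp_all only: of_nat_le_iff)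
  then show "int n \<le> 2 * Aa 1" "2 * Aa 1 \<le> 3 * int n" unfolding e by simp_all
qed

lemma Ax: "int n \<le> 2 * Aa x" "2 * Aa x \<le> 3 * int n"
proof -
  have e: "Aa x = int (s * x mod (2*n))" by (simp add: Aa_def of_nat_mod)
  have "int n \<le> int (2 * (s * x mod (2*n)))" "int (2 * (s * x mod (2*n))) \<le> int (3 * n)"
    using sxa sxb by (simp_all only: of_nat_le_iff)
  then show "int n \<le> 2 * Aa x" "2 * Aa x \<le> 3 * int n" unfolding e by simp_all
qed

lemma Ad: "d \<in> {1, x, n} \<Longrightarrow> int n \<le> 2 * Aa d \<and> 2 * Aa d \<le> 3 * int n"
  using A1 Ax An by auto

lemma adj_cases:
  assumes "EE a b"
  shows "\<exists>d\<in>{1, x, n}. \<exists>\<sigma>\<in>{1, -1::int}. (2 * int n) dvd (int b - int a - \<sigma> * int d)"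
proof -
  have ab: "a < 2 * n" "b < 2 * n" and cd: "circ_dist (2*n) a b \<in> {1, x, n}"
    using assms by (auto simp: circulant_adj_def)
  define dd where "dd = (if a \<le> b then b - a else a - b)"
  have cdd: "circ_dist (2*n) a b = min dd (2*n - dd)" by (simp add: circ_dist_def dd_def Let_def)
  have key: "\<exists>\<sigma>\<in>{1, -1::int}. (2 * int n) dvd (int b - int a - \<sigma> * int (circ_dist (2*n) a b))"
  proof (cases "dd \<le> 2*n - dd")
    case True
    then have c: "circ_dist (2*n) a b = dd" using cdd by simp
    show ?thesis
    proof (cases "a \<le> b")
      case True then show ?thesis using c by (intro bexI[of _ 1]) (auto simp: dd_def of_nat_diff)
    next
      case False then show ?thesis using c by (intro bexI[of _ "-1"]) (auto simp: dd_def of_nat_diff)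
    qed
  next
    case False
    then have c: "circ_dist (2*n) a b = 2*n - dd" using cdd by simp
    have ddle: "dd \<le> 2 * n" using ab by (auto simp: dd_def)
    show ?thesis
    proof (cases "a \<le> b")
      case True
      have "int b - int a - (-1) * int (2*n - dd) = 2 * int n" using True ddle by (simp add: dd_def of_nat_diff)
      then show ?thesis using c by (intro bexI[of _ "-1"]) auto
    next
      case False
      have "int b - int a - 1 * int (2*n - dd) = - (2 * int n)" using False ddle by (simp add: dd_def of_nat_diff)
      then show ?thesis using c by (intro bexI[of _ 1]) auto
    qed
  qed
  then show ?thesis using cd by blast
qed

lemma T_step:
  assumes "(2 * int n) dvd (int b - int a - \<sigma> * int d)"
  shows "(2 * int n) dvd (Ti b - Ti a - \<sigma> * Aa d)"
proof -
  let ?N = "2 * int n"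
  have "?N dvd (int s * (int b - int a - \<sigma> * int d))" using assms by simp
  moreover have "Ti b - Ti a - \<sigma> * Aa d = int s * (int b - int a - \<sigma> * int d)
      - ?N * ((int s * int b) div ?N - (int s * int a) div ?N - \<sigma> * ((int s * int d) div ?N))"
    unfolding Ti_def Aa_def by (simp add: minus_div_mult_eq_mod[symmetric] algebra_simps)
  ultimately show ?thesis by (metis dvd_diff dvd_triv_left)
qed

lemma colc_int: "int (colc n s v) = (if 2 * Ti v < int n then 0 else if 2 * Ti v < 2 * int n then 1
   else if 2 * Ti v < 3 * int n then 2 else 3)"
  unfolding colc_def Let_def Ti_nat[symmetric] by auto

lemma proper: "EE a b \<Longrightarrow> colc n s a \<noteq> colc n s b"
proof
  assume E: "EE a b" and c: "colc n s a = colc n s b"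
  obtain d \<sigma> where d: "d \<in> {1, x, n}" "\<sigma> \<in> {1, -1::int}" "(2 * int n) dvd (int b - int a - \<sigma> * int d)"
    using adj_cases[OF E] by blast
  have dv: "(2 * int n) dvd (Ti b - Ti a - \<sigma> * Aa d)" by (rule T_step[OF d(3)])
  have A: "int n \<le> 2 * Aa d" "2 * Aa d \<le> 3 * int n" using Ad[OF d(1)] by auto
  have close: "2 * Ti b - 2 * Ti a < int n" "2 * Ti a - 2 * Ti b < int n"
    using colc_int[of a] colc_int[of b] c Ti_bounds[of a] Ti_bounds[of b]
    by (auto split: if_splits)
  show False
  proof (cases "\<sigma> = 1")
    case True
    have dv': "(2 * int n) dvd (Ti b - Ti a - Aa d)" using dv True by simp
    have "- (2 * int n) < Ti b - Ti a - Aa d" "Ti b - Ti a - Aa d < 2 * int n" using A close by linarith+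
    then have "Ti b - Ti a - Aa d = 0" using dvd_between_0[OF dv'] by blast
    then show False using A close by linarith
  next
    case False
    then have s: "\<sigma> = -1" using d(2) by auto
    have dv': "(2 * int n) dvd (Ti b - Ti a + Aa d)" using dv s by simp
    have "- (2 * int n) < Ti b - Ti a + Aa d" "Ti b - Ti a + Aa d < 2 * int n" using A close by linarith+
    then have "Ti b - Ti a + Aa d = 0" using dvd_between_0[OF dv'] by blast
    then show False using A close by linarith
  qed
qed


definition uu :: int where "uu = (if Aa 1 < int n then 1 else -1)"
definition ww :: int where "ww = (if Aa x < int n then 1 else -1)"

lemma step:
  assumes E: "EE p q" and pos: "0 < \<Delta>" "\<Delta> < int n" and dq: "(2 * int n) dvd (\<Delta> - (Ti q - Ti p))"
  shows "\<exists>D. (D = uu \<or> D = ww * int x) \<and> (2 * int n) dvd (int q - int p - D)"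
proof -
  obtain d \<sigma> where d: "d \<in> {1, x, n}" "\<sigma> \<in> {1, -1::int}" "(2 * int n) dvd (int q - int p - \<sigma> * int d)"
    using adj_cases[OF E] by blast
  have dv: "(2 * int n) dvd (Ti q - Ti p - \<sigma> * Aa d)" by (rule T_step[OF d(3)])
  have dv2: "(2 * int n) dvd (\<Delta> - \<sigma> * Aa d)"
  proof -
    have "\<Delta> - \<sigma> * Aa d = (\<Delta> - (Ti q - Ti p)) + (Ti q - Ti p - \<sigma> * Aa d)" by simp
    then show ?thesis using dq dv by (metis dvd_add)
  qed
  have A: "int n \<le> 2 * Aa d" "2 * Aa d \<le> 3 * int n" using Ad[OF d(1)] by auto
  show ?thesis
  proof (cases "\<sigma> = 1")
    case True
    have dv': "(2 * int n) dvd (\<Delta> - Aa d)" using dv2 True by simp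
    have "- (2 * int n) < \<Delta> - Aa d" "\<Delta> - Aa d < 2 * int n" using A pos by linarith+
    then have eq: "\<Delta> = Aa d" using dvd_between_0[OF dv'] by simp
    have "d \<noteq> n" using eq An pos by auto
    then have "d = 1 \<or> d = x" using d(1) by auto
    then show ?thesis
    proof
      assume d1: "d = 1"
      then have "uu = 1" using eq pos by (simp add: uu_def)
      then show ?thesis using d(3) True d1 by (intro exI[of _ uu]) simp
    next
      assume dx: "d = x"
      then have "ww = 1" using eq pos by (simp add: ww_def)
      then show ?thesis using d(3) True dx by (intro exI[of _ "ww * int x"]) simp
    qed
  next
    case False
    then have s: "\<sigma> = -1" using d(2) by auto
    have dv': "(2 * int n) dvd (\<Delta> + Aa d)" using dv2 s by simp
    have "0 < \<Delta> + Aa d" "\<Delta> + Aa d < 2 * (2 * int n)" using A pos by linarith+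
    then have eq: "\<Delta> + Aa d = 2 * int n" using dvd_between_N[OF dv'] by simp
    have "d \<noteq> n" using eq An pos by auto
    then have "d = 1 \<or> d = x" using d(1) by auto
    then show ?thesis
    proof
      assume d1: "d = 1"
      then have "uu = -1" using eq pos by (simp add: uu_def)
      then show ?thesis using d(3) s d1 by (intro exI[of _ uu]) simp
    next
      assume dx: "d = x"
      then have "ww = -1" using eq pos by (simp add: ww_def)
      then show ?thesis using d(3) s dx by (intro exI[of _ "ww * int x"]) simp
    qed
  qed
qed

lemma adj_intro:
  assumes "a < 2 * n" "b < 2 * n" "(2 * int n) dvd (int b - int a - int n)"
  shows "EE a b"
proof -
  have "int b - int a = int n \<or> int b - int a = - int n"
  proof (cases "- (2 * int n) < int b - int a - int n")
    case True
    have "int b - int a - int n < 2 * int n" using assms(1,2) by linarith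
    then have "int b - int a - int n = 0" using dvd_between_0[OF assms(3)] True by blast
    then show ?thesis by simp
  next
    case False
    have dv: "(2 * int n) dvd (int b - int a - int n + 2 * int n)" using assms(3) by (metis dvd_add dvd_refl)
    have "- (2 * int n) < int b - int a - int n + 2 * int n" "int b - int a - int n + 2 * int n < 2 * int n"
      using False assms by linarith+
    then have "int b - int a - int n + 2 * int n = 0" using dvd_between_0[OF dv] by blast
    then show ?thesis by simp
  qed
  then have "circ_dist (2*n) a b = n" by (auto simp: circ_dist_def Let_def)
  then show ?thesis using assms by (simp add: circulant_adj_def)
qed

lemma shortcut_circ:
  assumes E: "EE a b" "EE b d" "EE d e" "EE a e"
    and c: "colc n s a = 0" "colc n s b = 1" "colc n s d = 2" "colc n s e = 3"
  shows "EE a d \<and> EE b e"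
proof -
  let ?N = "2 * int n"
  have ta: "2 * Ti a < int n" using colc_int[of a] c(1) by (auto split: if_splits)
  have tb: "int n \<le> 2 * Ti b" "2 * Ti b < 2 * int n" using colc_int[of b] c(2) by (auto split: if_splits)
  have td: "2 * int n \<le> 2 * Ti d" "2 * Ti d < 3 * int n" using colc_int[of d] c(3) by (auto split: if_splits)
  have te: "3 * int n \<le> 2 * Ti e" using colc_int[of e] c(4) by (auto split: if_splits)
  have bnd: "0 \<le> Ti a" "Ti e < 2 * int n" using Ti_bounds by auto
  obtain D1 where D1: "D1 = uu \<or> D1 = ww * int x" "?N dvd (int b - int a - D1)"
    using step[OF E(1), of "Ti b - Ti a"] ta tb bnd by auto
  obtain D2 where D2: "D2 = uu \<or> D2 = ww * int x" "?N dvd (int d - int b - D2)"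
    using step[OF E(2), of "Ti d - Ti b"] tb td by auto
  obtain D3 where D3: "D3 = uu \<or> D3 = ww * int x" "?N dvd (int e - int d - D3)"
    using step[OF E(3), of "Ti e - Ti d"] td te bnd by auto
  have Eea: "EE e a" using E(4) by (auto simp: circulant_adj_def circ_dist_sym)
  have "?N dvd ((Ti a + ?N - Ti e) - (Ti a - Ti e))" by simp
  then obtain D4 where D4: "D4 = uu \<or> D4 = ww * int x" "?N dvd (int a - int e - D4)"
    using step[OF Eea, of "Ti a + ?N - Ti e"] ta te bnd by auto
  have "?N dvd ((int b - int a - D1) + (int d - int b - D2) + (int e - int d - D3) + (int a - int e - D4))"
    using D1(2) D2(2) D3(2) D4(2) by (intro dvd_add) auto
  moreover have "(int b - int a - D1) + (int d - int b - D2) + (int e - int d - D3) + (int a - int e - D4)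
      = - (D1 + D2 + D3 + D4)" by simp
  ultimately have sd: "?N dvd (D1 + D2 + D3 + D4)" by (metis dvd_minus_iff)
  have xm: "4 \<le> int n" "3 * int x + 1 \<noteq> 2 * int n" "int x \<noteq> 3" using xmod nmod x1 x23 by presburger+
  have i: "1 < int x" "3 * int x \<le> 2 * int n" using x1 x23 by linarith+
  have "uu = 1 \<or> uu = -1" "ww = 1 \<or> ww = -1" by (auto simp: uu_def ww_def)
  then have all: "D1 = ww * int x \<and> D2 = ww * int x \<and> D3 = ww * int x \<and> D4 = ww * int x \<and> 4 * int x = 2 * int n"
    using sum4[OF i xm _ _ D1(1) D2(1) D3(1) D4(1) sd] by blast
  have w2: "2 * (ww * int x) = int n \<or> 2 * (ww * int x) = - int n"
    using all by (auto simp: ww_def)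
  have ad: "?N dvd (int d - int a - (D1 + D2))"
  proof -
    have "(int b - int a - D1) + (int d - int b - D2) = int d - int a - (D1 + D2)" by simp
    then show ?thesis using D1(2) D2(2) by (metis dvd_add)
  qed
  have fix_n: "?N dvd (z - int n)" if "?N dvd (z - y)" "y = int n \<or> y = - int n" for z y
  proof (cases "y = int n")
    case True then show ?thesis using that by simp
  next
    case False
    then have "y = - int n" using that by blast
    then have "z - int n = (z - y) - ?N" by simp
    then show ?thesis using that(1) by (metis dvd_diff dvd_refl)
  qed
  have ad': "?N dvd (int d - int a - int n)"
  proof -
    have "D1 + D2 = 2 * (ww * int x)" using all by simp
    then show ?thesis using fix_n[OF ad] w2 by simp
  qed
  have be: "?N dvd (int e - int b - (D2 + D3))"
  proof -
    have "(int d - int b - D2) + (int e - int d - D3) = int e - int b - (D2 + D3)" by simp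
    then show ?thesis using D2(2) D3(2) by (metis dvd_add)
  qed
  have be': "?N dvd (int e - int b - int n)"
  proof -
    have "D2 + D3 = 2 * (ww * int x)" using all by simp
    then show ?thesis using fix_n[OF be] w2 by simp
  qed
  have V: "a < 2 * n" "b < 2 * n" "d < 2 * n" "e < 2 * n" using E by (auto simp: circulant_adj_def)
  show ?thesis using adj_intro[OF V(1,3) ad'] adj_intro[OF V(2,4) be'] by blast
qed

lemma is_cgraph: "cgraph (2 * n) EE (colc n s)"
proof
  fix a b assume "EE a b" then show "EE b a" by (auto simp: circulant_adj_def circ_dist_sym)
next
  fix a b assume "EE a b" then show "a < 2 * n \<and> b < 2 * n" by (auto simp: circulant_adj_def)
next
  fix a b assume "EE a b" then show "colc n s a \<noteq> colc n s b" by (rule proper)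
next
  fix a show "colc n s a \<le> 3" by (simp add: colc_def Let_def)
next
  fix a b d e assume "EE a b" "EE b d" "EE d e" "EE a e"
    "colc n s a = 0" "colc n s b = 1" "colc n s d = 2" "colc n s e = 3"
  then show "EE a d \<and> EE b e" by (rule shortcut_circ)
qed

end



lemma s_exists:
  fixes n x :: nat
  assumes "1 < x" "x < n" "n mod 3 = 1" "x mod 3 = 2" "3 * x \<le> 2 * n"
  shows "\<exists>s. odd s \<and> n \<le> 2 * (s mod (2*n)) \<and> 2 * (s mod (2*n)) \<le> 3 * n \<and>
             n \<le> 2 * (s * x mod (2*n)) \<and> 2 * (s * x mod (2*n)) \<le> 3 * n"
proof -
  define a where "a = n div 3"
  define k where "k = x div 3"
  have n: "n = 3 * a + 1" using assms(3) unfolding a_def by presburger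
  have x: "x = 3 * k + 2" using assms(4) unfolding k_def by presburger
  have b: "9 * k + 4 \<le> 6 * a" using assms(5) n x by linarith
  have a1: "1 \<le> a" using b by linarith
  show ?thesis
  proof (cases "2 * k + 1 \<le> a")
    case True
    define s where "s = 2 * a + 1"
    have sm: "s mod (2 * n) = s" using n a1 by (simp add: s_def)
    have sx: "s * x = (4 * a + k + 2) + k * (2 * n)" unfolding s_def n x by (simp add: algebra_simps)
    have lt: "4 * a + k + 2 < 2 * n" using True n by linarith
    have "s * x mod (2 * n) = (4 * a + k + 2) mod (2 * n)" unfolding sx by (rule mod_mult_self1)
    then have sxm: "s * x mod (2 * n) = 4 * a + k + 2" using lt by simp
    show ?thesis using sm sxm True n by (intro exI[of _ s]) (auto simp: s_def)
  next
    case False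
    define s where "s = 2 * a + 3"
    have sm: "s mod (2 * n) = s" using n a1 by (simp add: s_def)
    have le: "2 * a \<le> 7 * k + 4" using False by linarith
    have sx: "s * x = (7 * k + 4 - 2 * a) + (k + 1) * (2 * n)" unfolding s_def n x using le
      by (simp add: algebra_simps)
    have lt: "7 * k + 4 - 2 * a < 2 * n" using b n by linarith
    have "s * x mod (2 * n) = (7 * k + 4 - 2 * a) mod (2 * n)" unfolding sx by (rule mod_mult_self1)
    then have sxm: "s * x mod (2 * n) = 7 * k + 4 - 2 * a" using lt by simp
    show ?thesis using sm sxm False n b le by (intro exI[of _ s]) (auto simp: s_def)
  qed
qed

theorem corollary7:
  fixes n x :: nat
  assumes "1 < x" and "x < n"
    and "n mod 3 = 1" and "x mod 3 = 2"
    and "3 * x \<le> 2 * n"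
  shows "word_representable {0..<2*n} (circulant_adj (2*n) {1, x, n})"
proof -
  obtain s where s: "odd s" "n \<le> 2 * (s mod (2*n))" "2 * (s mod (2*n)) \<le> 3 * n"
    "n \<le> 2 * (s * x mod (2*n))" "2 * (s * x mod (2*n)) \<le> 3 * n"
    using s_exists[OF assms] by blast
  interpret circ_setup n x s
    using assms s by unfold_locales auto
  interpret cgraph "2 * n" "circulant_adj (2*n) {1, x, n}" "colc n s"
    by (rule is_cgraph)
  show ?thesis by (rule word_rep)
qed

end
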